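(* Let $\Lambda\in\mathbb{R}^{p\times p}$ be a connected discrete-time interconnection, $r\in\mathbb{R}^p$ with $r^T\Lambda=r^T$, $r^T\mathbf 1=1$, and $\Omega$ symmetric positive definite with $(\Lambda-\mathbf 1r^T)^T\Omega(\Lambda-\mathbf 1r^T)-\Omega=-I_p$. Define $V(\mathbf x):=\mathbf x^T(\Omega\otimes I_n)\mathbf x$. Then for every $Q:\mathbb{N}\to\overline{\mathcal Q}_n$ and all $k\in\mathbb{N}$, the solution of $\mathbf x^+=(I_{np}+(\Lambda-I_p)\otimes Q_k)\mathbf x$ satisfies $$V(\mathbf x(k+1)-\bar{\mathbf x})-V(\mathbf x(k)-\bar{\mathbf x})\le-(\mathbf x(k)-\bar{\mathbf x})^T(I_p\otimes Q_k^2)(\mathbf x(k)-\bar{\mathbf x}),$$ where $\bar{\mathbf x}:=(\mathbf 1r^T\otimes I_n)\mathbf x(0)$.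
   Context: $\mathbf 1$ all-ones vector; $\otimes$ Kronecker product; $\overline{\mathcal Q}_n$ symmetric positive semidefinite $n\times n$ matrices with induced 2-norm at most $1$. Discrete-time interconnection: $\lambda_{ij}\ge0$, row sums $1$; graph edge $(n_i,n_j)$ iff $\lambda_{ij}>0$; connected if some node is reachable by a directed path from every other node. *)

theory Defs
  imports "HOL-Analysis.Analysis"
begin

text \<open>Kronecker product. Vectors in R^(p n) are indexed by pairs (i,a), i block index
  (in 'p), a index inside the block (in 'n); this is the standard block ordering.\<close>
definition kron :: "real^'c^'a \<Rightarrow> real^'d^'b \<Rightarrow> real^('c \<times> 'd)^('a \<times> 'b)" where
  "kron A B = (\<chi> ia jb. A $ fst ia $ fst jb * B $ snd ia $ snd jb)"

definition dt_interconnection :: "real^'p^'p \<Rightarrow> bool" where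
  "dt_interconnection L \<longleftrightarrow> (\<forall>i j. L $ i $ j \<ge> 0) \<and> (\<forall>i. (\<Sum>j\<in>UNIV. L $ i $ j) = 1)"

definition graph_edges :: "real^'p^'p \<Rightarrow> ('p \<times> 'p) set" where
  "graph_edges L = {(i, j). L $ i $ j > 0}"

definition connected_graph :: "real^'p^'p \<Rightarrow> bool" where
  "connected_graph L \<longleftrightarrow> (\<exists>c. \<forall>j. (j, c) \<in> (graph_edges L)\<^sup>*)"

definition sym_psd :: "real^'n^'n \<Rightarrow> bool" where
  "sym_psd A \<longleftrightarrow> transpose A = A \<and> (\<forall>v. v \<bullet> (A *v v) \<ge> 0)"

definition sym_pd :: "real^'n^'n \<Rightarrow> bool" where
  "sym_pd A \<longleftrightarrow> transpose A = A \<and> (\<forall>v. v \<noteq> 0 \<longrightarrow> v \<bullet> (A *v v) > 0)"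

definition Qbar :: "(real^'n^'n) set" where
  "Qbar = {A. sym_psd A \<and> onorm (\<lambda>v. A *v v) \<le> 1}"

definition ones_r :: "real^'p \<Rightarrow> real^'p^'p" where
  "ones_r r = (\<chi> i j. r $ j)"

end

theory Submission imports Defs begin

lemma sum_pair: "(\<Sum>x\<in>(UNIV::('a::finite\<times>'b::finite) set). g x) = (\<Sum>i\<in>UNIV. \<Sum>a\<in>UNIV. g (i,a))"
  by (subst UNIV_Times_UNIV[symmetric], simp only: sum.cartesian_product case_prod_beta prod.collapse, simp add: case_prod_unfold)

lemma kron_mult: "kron A B ** kron C D = kron (A ** C) (B ** D)"
  unfolding kron_def matrix_matrix_mult_def
  by (simp add: vec_eq_iff sum_pair sum_product) (auto intro!: sum.cong simp: mult_ac)

lemma kron_add1: "kron (A + B) C = kron A C + kron B C"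
  unfolding kron_def by (simp add: vec_eq_iff algebra_simps)
lemma kron_diff1: "kron (A - B) C = kron A C - kron B C"
  unfolding kron_def by (simp add: vec_eq_iff algebra_simps)
lemma kron_add2: "kron C (A + B) = kron C A + kron C B"
  unfolding kron_def by (simp add: vec_eq_iff algebra_simps)
lemma kron_diff2: "kron C (A - B) = kron C A - kron C B"
  unfolding kron_def by (simp add: vec_eq_iff algebra_simps)
lemma kron_zero1[simp]: "kron 0 C = 0"
  unfolding kron_def by (simp add: vec_eq_iff)
lemma kron_transpose: "transpose (kron A B) = kron (transpose A) (transpose B)"
  unfolding kron_def transpose_def by (simp add: vec_eq_iff)
lemma kron_mat1: "kron (mat 1) (mat 1) = mat 1"
  unfolding kron_def mat_def by (auto simp add: vec_eq_iff prod_eq_iff)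
lemma dot_transp: "(x::real^'n) \<bullet> (A *v y) = (transpose A *v x) \<bullet> y"
  by (metis dot_lmul_matrix transpose_matrix_vector)

lemma kronI_apply: "(kron (mat 1 :: real^'p^'p) R *v f) $ (i,a) = (R *v (\<chi> b. f $ (i,b))) $ a"
proof -
  have "(kron (mat 1 :: real^'p^'p) R *v f) $ (i,a) = (\<Sum>j\<in>UNIV. \<Sum>b\<in>UNIV. (if i = j then 1 else 0) * R $ a $ b * f $ (j,b))"
    unfolding kron_def mat_def matrix_vector_mult_def by (simp add: sum_pair)
  also have "\<dots> = (\<Sum>j\<in>UNIV. if i = j then (\<Sum>b\<in>UNIV. R $ a $ b * f $ (j,b)) else 0)"
    by (rule sum.cong, simp, case_tac "i = x", simp_all)
  also have "\<dots> = (\<Sum>b\<in>UNIV. R $ a $ b * f $ (i,b))"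
    by simp
  finally show ?thesis by (simp add: matrix_vector_mult_def)
qed

lemma kron_I_psd:
  fixes R :: "real^'n^'n" and f :: "real^('p::finite\<times>'n::finite)"
  assumes "\<And>v. v \<bullet> (R *v v) \<ge> 0"
  shows "f \<bullet> (kron (mat 1 :: real^'p^'p) R *v f) \<ge> 0"
proof -
  have "f \<bullet> (kron (mat 1 :: real^'p^'p) R *v f) = (\<Sum>i\<in>UNIV. (\<chi> a. f $ (i,a)) \<bullet> (R *v (\<chi> a. f $ (i,a))))"
    unfolding inner_vec_def by (simp add: sum_pair kronI_apply)
  also have "\<dots> \<ge> 0" by (intro sum_nonneg assms)
  finally show ?thesis .
qed

lemma kron_I2_apply: "(kron R (mat 1 :: real^'n^'n) *v f) $ (i,a) = (R *v (\<chi> j. f $ (j,a))) $ i"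
proof -
  have "(kron R (mat 1 :: real^'n^'n) *v f) $ (i,a) = (\<Sum>j\<in>UNIV. \<Sum>b\<in>UNIV. R $ i $ j * (if a = b then 1 else 0) * f $ (j,b))"
    unfolding kron_def mat_def matrix_vector_mult_def by (simp add: sum_pair)
  also have "\<dots> = (\<Sum>j\<in>UNIV. R $ i $ j * f $ (j,a))"
    by (simp add: if_distrib if_distribR sum.delta cong: if_cong)
  finally show ?thesis by (simp add: matrix_vector_mult_def)
qed

lemma kron_I2_psd:
  fixes R :: "real^'p^'p" and f :: "real^('p::finite\<times>'n::finite)"
  assumes "\<And>v. v \<bullet> (R *v v) \<ge> 0"
  shows "f \<bullet> (kron R (mat 1 :: real^'n^'n) *v f) \<ge> 0"
proof -
  have "f \<bullet> (kron R (mat 1 :: real^'n^'n) *v f) = (\<Sum>a\<in>UNIV. (\<chi> i. f $ (i,a)) \<bullet> (R *v (\<chi> i. f $ (i,a))))"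
    unfolding inner_vec_def by (simp add: sum_pair kron_I2_apply) (rule sum.swap)
  also have "\<dots> \<ge> 0" by (intro sum_nonneg assms)
  finally show ?thesis .
qed

lemma dot_transp2: "((A::real^'n^'m) *v x) \<bullet> y = x \<bullet> (transpose A *v y)"
  by (simp add: dot_transp inner_commute)

lemma sym_dot: "transpose (Q::real^'n^'n) = Q \<Longrightarrow> v \<bullet> (Q *v w) = (Q *v v) \<bullet> w"
  by (metis dot_transp)

lemma R_psd:
  fixes Q :: "real^'n^'n"
  assumes sym: "transpose Q = Q" and psd: "\<And>v. v \<bullet> (Q *v v) \<ge> 0"
    and on: "onorm (\<lambda>v. Q *v v) \<le> 1"
  shows "v \<bullet> ((Q - Q ** Q) *v v) \<ge> 0"
proof -
  define w where "w = Q *v v"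
  have nQ: "norm (Q *v w) \<le> norm w"
  proof -
    have "norm (Q *v w) \<le> onorm (\<lambda>v. Q *v v) * norm w"
      by (rule onorm) simp
    also have "\<dots> \<le> 1 * norm w" by (rule mult_right_mono[OF on]) simp
    finally show ?thesis by simp
  qed
  have "w \<bullet> (Q *v w) \<le> norm w * norm (Q *v w)" by (rule norm_cauchy_schwarz)
  also have "\<dots> \<le> norm w * norm w" by (rule mult_left_mono[OF nQ]) simp
  finally have a: "w \<bullet> (Q *v w) \<le> w \<bullet> w" by (simp add: power2_norm_eq_inner[symmetric] power2_eq_square)
  have b: "v \<bullet> (Q *v w) = w \<bullet> w" unfolding w_def by (rule sym_dot[OF sym])
  have c: "w \<bullet> (Q *v v) = w \<bullet> w" unfolding w_def ..
  have "0 \<le> (v - w) \<bullet> (Q *v (v - w))" by (rule psd)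
  also have "\<dots> = v \<bullet> (Q *v v) - v \<bullet> (Q *v w) - w \<bullet> (Q *v v) + w \<bullet> (Q *v w)"
    by (simp add: matrix_vector_mult_diff_distrib inner_diff_left inner_diff_right)
  finally have d: "0 \<le> v \<bullet> (Q *v v) - w \<bullet> w" using a b c by linarith
  have "v \<bullet> ((Q - Q ** Q) *v v) = v \<bullet> (Q *v v) - v \<bullet> (Q *v w)"
    by (simp add: matrix_vector_mult_diff_rdistrib inner_diff_right w_def matrix_vector_mul_assoc)
  with d b show ?thesis by simp
qed

lemma kron_conj:
  fixes M :: "real^'p^'p" and S :: "real^'n^'n" and Om :: "real^'p^'p"
  shows "(kron M (mat 1 :: real^'n^'n) *v g) \<bullet> (kron Om S *v (kron M (mat 1) *v g))
     = g \<bullet> (kron (transpose M ** Om ** M) S *v g)"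
  by (simp add: dot_transp2 kron_transpose matrix_vector_mul_assoc kron_mult matrix_mul_assoc)

lemma lyap_psd:
  fixes M Om :: "real^'p^'p" and R :: "real^'n^'n" and f :: "real^('p \<times> 'n)"
  assumes lyap: "transpose M ** Om ** M - Om = - mat 1"
    and Opsd: "\<And>v. v \<bullet> (Om *v v) \<ge> 0" and Rpsd: "\<And>v. v \<bullet> (R *v v) \<ge> 0"
  shows "f \<bullet> (kron Om R *v f) \<ge> 0"
proof (rule ccontr)
  assume neg: "\<not> ?thesis"
  define F where "F = (\<lambda>K. (((*v) (kron M (mat 1 :: real^'n^'n))) ^^ K) f)"
  have FS: "F (Suc K) = kron M (mat 1) *v F K" for K by (simp add: F_def)
  have F0: "F 0 = f" by (simp add: F_def)
  have MOM: "transpose M ** Om ** M = Om - mat 1" using lyap by (simp add: algebra_simps)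
  define g where "g K = F K \<bullet> (kron Om R *v F K)" for K
  define V where "V K = F K \<bullet> (kron Om (mat 1 :: real^'n^'n) *v F K)" for K
  have gS: "g (Suc K) = g K - F K \<bullet> (kron (mat 1) R *v F K)" for K
    unfolding g_def FS kron_conj MOM kron_diff1
    by (simp add: matrix_vector_mult_diff_rdistrib inner_diff_right)
  have VS: "V (Suc K) = V K - (norm (F K))^2" for K
    unfolding V_def FS kron_conj MOM kron_diff1 kron_mat1
    by (simp add: matrix_vector_mult_diff_rdistrib inner_diff_right power2_norm_eq_inner)
  have gdec: "g K \<le> g 0" for K
  proof (induction K)
    case (Suc K) then show ?case using gS[of K] kron_I_psd[OF Rpsd, of "F K"] by linarith
  qed simp
  have Vsum: "(\<Sum>K<N. (norm (F K))^2) = V 0 - V N" for N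
    by (induction N) (simp_all add: VS)
  have Vnn: "V N \<ge> 0" for N unfolding V_def by (rule kron_I2_psd[OF Opsd])
  define C where "C = onorm ((*v) (kron Om R))"
  have gb: "\<bar>g K\<bar> \<le> C * (norm (F K))^2" for K
  proof -
    have "\<bar>g K\<bar> \<le> norm (F K) * norm (kron Om R *v F K)" unfolding g_def by (rule Cauchy_Schwarz_ineq2)
    also have "\<dots> \<le> norm (F K) * (C * norm (F K))"
      by (rule mult_left_mono) (simp_all add: C_def onorm)
    finally show ?thesis by (simp add: power2_eq_square mult_ac)
  qed
  have g0: "g 0 < 0" using neg by (simp add: g_def F0)
  have Cpos: "C > 0"
  proof -
    have "0 < - g 0" using g0 by simp
    also have "\<dots> \<le> \<bar>g 0\<bar>" by simp
    also have "\<dots> \<le> C * (norm (F 0))^2" by (rule gb)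
    finally have "0 < C * (norm (F 0))^2" .
    moreover have "C \<ge> 0" unfolding C_def by (rule onorm_pos_le) simp
    ultimately show ?thesis by (metis less_eq_real_def mult_zero_left)
  qed
  define d where "d = - g 0 / C"
  have dpos: "d > 0" using g0 Cpos by (simp add: d_def divide_neg_pos)
  have low: "d \<le> (norm (F K))^2" for K
  proof -
    have "- g 0 \<le> - g K" using gdec[of K] by simp
    also have "\<dots> \<le> C * (norm (F K))^2" using gb[of K] by simp
    finally show ?thesis unfolding d_def by (subst pos_divide_le_eq[OF Cpos]) (simp add: mult.commute)
  qed
  obtain N where N: "V 0 < of_nat N * d" using ex_less_of_nat_mult[OF dpos] by blast
  have "of_nat N * d = (\<Sum>K<N. d)" by simp
  also have "\<dots> \<le> (\<Sum>K<N. (norm (F K))^2)" by (rule sum_mono) (rule low)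
  also have "\<dots> \<le> V 0" using Vsum[of N] Vnn[of N] by simp
  finally show False using N by simp
qed
lemma mat_diff_ldistrib: "(A::real^'n^'m) ** (B - C) = A ** B - A ** C"
  by (simp add: matrix_matrix_mult_def vec_eq_iff sum_subtractf algebra_simps)
lemma mat_diff_rdistrib: "((B::real^'n^'m) - C) ** A = B ** A - C ** A"
  by (simp add: matrix_matrix_mult_def vec_eq_iff sum_subtractf algebra_simps)
lemma mat_add_rdistrib: "((B::real^'n^'m) + C) ** A = B ** A + C ** A"
  by (simp add: matrix_matrix_mult_def vec_eq_iff sum.distrib algebra_simps)
lemma transpose_diff: "transpose ((A::real^'n^'m) - B) = transpose A - transpose B"
  by (simp add: transpose_def vec_eq_iff)
lemma qf_transpose: "(e::real^'n) \<bullet> (A *v e) = e \<bullet> (transpose A *v e)"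
  by (simp add: dot_transp inner_commute)

theorem lemma4:
  fixes L :: "real^'p^'p" and r :: "real^'p" and Om :: "real^'p^'p"
    and Q :: "nat \<Rightarrow> real^'n^'n" and x :: "nat \<Rightarrow> real^('p \<times> 'n)" and k :: nat
  assumes "dt_interconnection L" and "connected_graph L"
    and "r v* L = r" and "r \<bullet> vec 1 = 1"
    and "sym_pd Om"
    and "transpose (L - ones_r r) ** Om ** (L - ones_r r) - Om = - mat 1"
    and "\<And>k. Q k \<in> Qbar"
    and "\<And>k. x (Suc k) = (mat 1 + kron (L - mat 1) (Q k)) *v x k"
  shows "let V = (\<lambda>y. y \<bullet> (kron Om (mat 1 :: real^'n^'n) *v y));
             xb = kron (ones_r r) (mat 1 :: real^'n^'n) *v x 0
         in V (x (Suc k) - xb) - V (x k - xb)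
            \<le> - ((x k - xb) \<bullet> (kron (mat 1 :: real^'p^'p) (Q k ** Q k) *v (x k - xb)))"
proof -
  note dt = assms(1) and rL = assms(3) and r1 = assms(4) and pd = assms(5) and lyap = assms(6)
    and QQ = assms(7) and xs = assms(8)
  define I where "I = (mat 1 :: real^'n^'n)"
  define Ip where "Ip = (mat 1 :: real^'p^'p)"
  define E where "E = ones_r r"
  define M where "M = L - E"
  define P where "P = kron E I"
  define xb where "xb = P *v x 0"
  define Qk where "Qk = Q k"
  define W where "W = kron Om I"
  have Qsym: "transpose Qk = Qk" and Qpsd: "\<And>v. v \<bullet> (Qk *v v) \<ge> 0"
    and Qon: "onorm (\<lambda>v. Qk *v v) \<le> 1"
    using QQ[of k] unfolding Qk_def Qbar_def sym_psd_def by auto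
  have Omsym: "transpose Om = Om" using pd unfolding sym_pd_def by auto
  have Ompsd: "v \<bullet> (Om *v v) \<ge> 0" for v
    using pd unfolding sym_pd_def by (cases "v = 0") (auto intro: less_imp_le)
  have LE: "L ** E = E"
  proof -
    have "(\<Sum>j\<in>UNIV. L $ i $ j) = 1" for i using dt unfolding dt_interconnection_def by auto
    then show ?thesis unfolding E_def ones_r_def matrix_matrix_mult_def
      by (simp add: vec_eq_iff sum_distrib_right[symmetric])
  qed
  have EL: "E ** L = E"
  proof -
    have "(\<Sum>i\<in>UNIV. r $ i * L $ i $ j) = r $ j" for j
      using arg_cong[OF rL, of "\<lambda>v. v $ j"] unfolding vector_matrix_mult_def by simp
    then show ?thesis unfolding E_def ones_r_def matrix_matrix_mult_def
      by (simp add: vec_eq_iff)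
  qed
  have EE: "E ** E = E"
  proof -
    have "(\<Sum>i\<in>UNIV. r $ i) = 1" using r1 by (simp add: inner_vec_def)
    then show ?thesis unfolding E_def ones_r_def matrix_matrix_mult_def
      by (simp add: vec_eq_iff sum_distrib_right[symmetric])
  qed
  have PA: "P ** (mat 1 + kron (L - mat 1) (Q j)) = P" for j
  proof -
    have "E ** (L - mat 1) = 0" by (simp add: mat_diff_ldistrib EL)
    then show ?thesis
      by (simp add: matrix_add_ldistrib P_def kron_mult)
  qed
  have Px: "P *v x j = xb" for j
  proof (induction j)
    case 0 then show ?case by (simp add: xb_def)
  next
    case (Suc j) then show ?case by (simp add: xs matrix_vector_mul_assoc PA)
  qed
  have PP: "P ** P = P" by (simp add: P_def kron_mult EE I_def)
  define A where "A = mat 1 + kron (L - Ip) Qk"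
  have AP: "A ** P = P"
  proof -
    have "(L - Ip) ** E = 0" by (simp add: mat_diff_rdistrib LE Ip_def)
    then show ?thesis by (simp add: A_def mat_add_rdistrib P_def kron_mult)
  qed
  define e where "e = x k - xb"
  have Pxb: "P *v xb = xb" by (simp only: xb_def matrix_vector_mul_assoc PP)
  have Pe: "P *v e = 0"
    by (simp add: e_def matrix_vector_mult_diff_distrib Px Pxb)
  have xS: "x (Suc k) - xb = A *v e"
  proof -
    have Axb: "A *v xb = xb" by (simp only: xb_def matrix_vector_mul_assoc AP)
    have "x (Suc k) = A *v x k" using xs[of k] by (simp add: A_def Ip_def Qk_def)
    then show ?thesis
      by (simp add: e_def matrix_vector_mult_diff_distrib Axb)
  qed
  define a where "a = kron Ip Qk *v e"
  define b where "b = kron M Qk *v e"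
  have Ae: "A *v e = e - a + b"
  proof -
    have "kron E Qk = kron Ip Qk ** P" by (simp add: P_def kron_mult Ip_def I_def)
    then have z: "kron E Qk *v e = 0" by (simp add: matrix_vector_mul_assoc[symmetric] Pe)
    have "A = mat 1 + kron M Qk + kron E Qk - kron Ip Qk"
      by (simp add: A_def M_def kron_diff1 kron_add1[symmetric])
    then show ?thesis using z
      by (simp add: a_def b_def matrix_vector_mult_add_rdistrib matrix_vector_mult_diff_rdistrib)
  qed
  have Wt: "transpose W = W" by (simp add: W_def kron_transpose Omsym I_def)
  have Wsym: "u \<bullet> (W *v v) = v \<bullet> (W *v u)" for u v
    by (metis Wt dot_transp inner_commute)
  define qf where "qf S T = e \<bullet> (kron S T *v e)" for S :: "real^'p^'p" and T :: "real^'n^'n"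
  have qf_add1: "qf (S1 + S2) T = qf S1 T + qf S2 T" for S1 S2 T
    by (simp add: qf_def kron_add1 matrix_vector_mult_add_rdistrib inner_add_right)
  have qf_diff1: "qf (S1 - S2) T = qf S1 T - qf S2 T" for S1 S2 T
    by (simp add: qf_def kron_diff1 matrix_vector_mult_diff_rdistrib inner_diff_right)
  have qf_diff2: "qf S (T1 - T2) = qf S T1 - qf S T2" for S T1 T2
    by (simp add: qf_def kron_diff2 matrix_vector_mult_diff_rdistrib inner_diff_right)
  have qf_tr: "qf S T = qf (transpose S) (transpose T)" for S T
    unfolding qf_def by (subst qf_transpose) (simp add: kron_transpose)
  have exp: "(e - a + b) \<bullet> (W *v (e - a + b)) = e \<bullet> (W *v e) + a \<bullet> (W *v a) + b \<bullet> (W *v b)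
      - 2 * (e \<bullet> (W *v a)) + 2 * (e \<bullet> (W *v b)) - 2 * (a \<bullet> (W *v b))"
    using Wsym[of a e] Wsym[of b e] Wsym[of b a]
    by (simp add: matrix_vector_right_distrib matrix_vector_mult_diff_distrib inner_add_left
        inner_add_right inner_diff_left inner_diff_right)
  have t1: "e \<bullet> (W *v a) = qf Om Qk"
    by (simp add: qf_def a_def W_def matrix_vector_mul_assoc kron_mult Ip_def I_def)
  have t2: "e \<bullet> (W *v b) = qf (Om ** M) Qk"
    by (simp add: qf_def b_def W_def matrix_vector_mul_assoc kron_mult I_def)
  have t3: "a \<bullet> (W *v a) = qf Om (Qk ** Qk)"
    by (simp add: qf_def a_def W_def dot_transp2 matrix_vector_mul_assoc kron_mult kron_transpose
        Ip_def I_def Qsym)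
  have MOM: "transpose M ** Om ** M = Om - Ip" using lyap by (simp add: M_def E_def Ip_def algebra_simps)
  have t4: "b \<bullet> (W *v b) = qf Om (Qk ** Qk) - qf Ip (Qk ** Qk)"
  proof -
    have "b \<bullet> (W *v b) = qf (transpose M ** Om ** M) (Qk ** Qk)"
      by (simp add: qf_def b_def W_def dot_transp2 matrix_vector_mul_assoc kron_mult kron_transpose
        I_def Qsym matrix_mul_assoc)
    then show ?thesis by (simp add: MOM qf_diff1)
  qed
  have t5: "a \<bullet> (W *v b) = qf (Om ** M) (Qk ** Qk)"
    by (simp add: qf_def a_def b_def W_def dot_transp2 matrix_vector_mul_assoc kron_mult kron_transpose
        Ip_def I_def Qsym matrix_mul_assoc)
  define R where "R = Qk - Qk ** Qk"
  have Rt: "transpose R = R" by (simp add: R_def transpose_diff matrix_transpose_mul Qsym)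
  have Rpsd: "v \<bullet> (R *v v) \<ge> 0" for v unfolding R_def by (rule R_psd[OF Qsym Qpsd Qon])
  define N where "N = M - Ip"
  have key: "transpose N ** Om ** N + Ip = (Om + Om) - transpose M ** Om - Om ** M"
  proof -
    have "transpose N ** Om ** N = transpose M ** Om ** M - transpose M ** Om - Om ** M + Om"
      by (simp add: N_def transpose_diff mat_diff_ldistrib mat_diff_rdistrib Ip_def matrix_mul_assoc
          algebra_simps)
    then show ?thesis by (simp add: MOM algebra_simps)
  qed
  have sym2: "qf (Om ** M) R = qf (transpose M ** Om) R"
    by (subst qf_tr) (simp add: matrix_transpose_mul Omsym Rt)
  have nn1: "qf (transpose N ** Om ** N) R \<ge> 0"
  proof -
    have "qf (transpose N ** Om ** N) R = (kron N I *v e) \<bullet> (kron Om R *v (kron N I *v e))"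
      by (simp add: qf_def kron_conj I_def)
    also have "\<dots> \<ge> 0" by (rule lyap_psd[OF lyap[folded E_def M_def] Ompsd Rpsd])
    finally show ?thesis .
  qed
  have nn2: "qf Ip R \<ge> 0" unfolding qf_def Ip_def by (rule kron_I_psd[OF Rpsd])
  have "qf (transpose N ** Om ** N + Ip) R = qf (transpose N ** Om ** N) R + qf Ip R"
    by (rule qf_add1)
  also have "qf (transpose N ** Om ** N + Ip) R = 2 * qf Om R - qf (transpose M ** Om) R - qf (Om ** M) R"
    by (simp only: key qf_diff1 qf_add1)
  finally have ineq: "qf (Om ** M) R \<le> qf Om R" using nn1 nn2 sym2 by linarith
  have R1: "qf (Om ** M) R = qf (Om ** M) Qk - qf (Om ** M) (Qk ** Qk)" by (simp add: R_def qf_diff2)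
  have R2: "qf Om R = qf Om Qk - qf Om (Qk ** Qk)" by (simp add: R_def qf_diff2)
  have goal: "(e - a + b) \<bullet> (W *v (e - a + b)) - e \<bullet> (W *v e) \<le> - qf Ip (Qk ** Qk)"
    unfolding exp t1 t2 t3 t4 t5 using ineq R1 R2 by linarith
  show ?thesis
    using goal unfolding Let_def xS[unfolded xb_def P_def E_def I_def] Ae[symmetric]
    by (simp add: qf_def W_def I_def Ip_def Qk_def e_def xb_def P_def E_def)
qed
end
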